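(* Let $\gamma:[0,1]\to\mathbb{R}^2$ be a $C^1$ curve of constant speed $c>0$ with $\gamma(0)\neq\gamma(1)$, whose turning angle function $\theta$ satisfies $\theta(1)-\theta(0)=2\pi m$ with $0\neq m\in\mathbb{Z}$. Let $k\ge 4$ and $\sigma\in S_k$. Then there exist cuts $C\in\partial D_k$ such that $r_{\sigma,C}$ is a closed $C^1$ curve if and only if $\sigma\in S_k\setminus Z_k$.
   Context: A turning angle function is a continuous $\theta$ with $\gamma'(s)=c(\cos\theta(s),\sin\theta(s))$. Concatenation $\alpha*\beta$ of two $C^1$ planar curves of the same constant speed ($\alpha$ on $[a_1,b_1]$, $\beta$ on $[a_2,b_2]$) is the curve equal to $\alpha(s+a_1)$ for $s\le b_1-a_1$ and to $T(\beta(s-(b_1-a_1)+a_2))$ afterwards, where $T$ is the orientation-preserving rigid motion sending $\beta(a_2)$ to $\alpha(b_1)$ and the unit tangent of $\beta$ at $a_2$ to that of $\alpha$ at $b_1$; it is associative. Let $D_k=\{(c_1,\dots,c_{k-1})\in[0,1]^{k-1}: 0\le c_1\le\dots\le c_{k-1}\le 1\}$, with topological boundary $\partial D_k$ in $\mathbb{R}^{k-1}$; set $c_0=0$, $c_k=1$. For $C\in D_k$ let $\gamma_i$ be the restriction of $\gamma$ to $[c_{i-1},c_i]$ (a degenerate arc is a point carrying the tangent direction of $\gamma$ there). For $\sigma\in S_k$, $r_{\sigma,C}:=\gamma_{\sigma(1)}*\dots*\gamma_{\sigma(k)}$ over $[0,1]$. Closed $C^1$ means the end point equals the start point and the tangents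 there agree. $Z_k=\{z_0,\dots,z_{k-1}\}$ with $z_h(i)=i+h$ if $i\le k-h$ and $z_h(i)=i+h-k$ if $i>k-h$. *)

theory Defs
  imports "HOL-Analysis.Analysis"
begin

text \<open>The plane R^2 is identified with the complex numbers. A (piece of) curve is
  represented by its parametrisation, its parameter interval [lo, hi], and the unit
  tangent vectors at its start and end point (so that degenerate arcs, i.e. points,
  still carry a tangent direction).\<close>

record pcurve =
  fn :: "real \<Rightarrow> complex"
  lo :: real
  hi :: real
  tstart :: complex
  tend :: complex

text \<open>Concatenation alpha * beta: alpha(s + a1) for s \<le> b1 - a1, and T(beta(s - (b1 - a1) + a2))
  afterwards, where T is the orientation preserving rigid motion z \<mapsto> alpha(b1) + rot (z - beta(a2))
  with rot the unit complex number rotating the start tangent of beta to the end tangent of alpha.\<close>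

definition concat :: "pcurve \<Rightarrow> pcurve \<Rightarrow> pcurve" where
  "concat \<alpha> \<beta> =
    (let L1 = hi \<alpha> - lo \<alpha>; L2 = hi \<beta> - lo \<beta>;
         rot = tend \<alpha> / tstart \<beta>;
         T = (\<lambda>z. fn \<alpha> (hi \<alpha>) + rot * (z - fn \<beta> (lo \<beta>)))
     in \<lparr>fn = (\<lambda>s. if s \<le> L1 then fn \<alpha> (s + lo \<alpha>) else T (fn \<beta> (s - L1 + lo \<beta>))),
         lo = 0, hi = L1 + L2, tstart = tstart \<alpha>, tend = rot * tend \<beta>\<rparr>)"

definition utan :: "(real \<Rightarrow> complex) \<Rightarrow> real \<Rightarrow> complex" where
  "utan \<gamma> s = sgn (vector_derivative \<gamma> (at s within {0..1}))"

definition cutpt :: "nat \<Rightarrow> (nat \<Rightarrow> real) \<Rightarrow> nat \<Rightarrow> real" where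
  "cutpt k C i = (if i = 0 then 0 else if i = k then 1 else C i)"

text \<open>D_k as a subset of R^{k-1} = (extensional functions on {1..k-1}).\<close>
definition Dk :: "nat \<Rightarrow> (nat \<Rightarrow> real) set" where
  "Dk k = {C \<in> PiE {1..k-1} (\<lambda>_. UNIV). \<forall>i\<in>{1..k}. cutpt k C (i - 1) \<le> cutpt k C i}"

definition Dk_boundary :: "nat \<Rightarrow> (nat \<Rightarrow> real) set" where
  "Dk_boundary k = (product_topology (\<lambda>_. euclideanreal) {1..k-1}) frontier_of (Dk k)"

definition arc :: "(real \<Rightarrow> complex) \<Rightarrow> nat \<Rightarrow> (nat \<Rightarrow> real) \<Rightarrow> nat \<Rightarrow> pcurve" where
  "arc \<gamma> k C i = \<lparr>fn = \<gamma>, lo = cutpt k C (i - 1), hi = cutpt k C i,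
                    tstart = utan \<gamma> (cutpt k C (i - 1)), tend = utan \<gamma> (cutpt k C i)\<rparr>"

text \<open>r_{sigma,C} = gamma_{sigma(1)} * ... * gamma_{sigma(k)} (left-associated; concatenation is associative).\<close>
definition rcurve :: "(real \<Rightarrow> complex) \<Rightarrow> nat \<Rightarrow> (nat \<Rightarrow> nat) \<Rightarrow> (nat \<Rightarrow> real) \<Rightarrow> pcurve" where
  "rcurve \<gamma> k \<sigma> C = foldl concat (arc \<gamma> k C (\<sigma> 1)) (map (\<lambda>j. arc \<gamma> k C (\<sigma> j)) [2..<k+1])"

definition closed_C1 :: "pcurve \<Rightarrow> bool" where
  "closed_C1 r \<longleftrightarrow> fn r (lo r) = fn r (hi r) \<and> tstart r = tend r"

definition zshift :: "nat \<Rightarrow> nat \<Rightarrow> nat \<Rightarrow> nat" where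
  "zshift k h i = (if i \<in> {1..k} then (if i \<le> k - h then i + h else i + h - k) else i)"

definition Zk :: "nat \<Rightarrow> (nat \<Rightarrow> nat) set" where
  "Zk k = {zshift k h | h. h < k}"

end

theory Submission
  imports Defs
begin

definition Dn :: "pcurve \<Rightarrow> complex" where
  "Dn a = (fn a (hi a) - fn a (lo a)) / tstart a"
definition Rn :: "pcurve \<Rightarrow> complex" where
  "Rn a = tend a / tstart a"
definition good :: "pcurve \<Rightarrow> bool" where
  "good a \<longleftrightarrow> lo a \<le> hi a \<and> tstart a \<noteq> 0 \<and> tend a \<noteq> 0"

fun Dl :: "pcurve list \<Rightarrow> complex" where
  "Dl [] = 0"
| "Dl (x # xs) = Dn x + Rn x * Dl xs"

definition Rl :: "pcurve list \<Rightarrow> complex" where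
  "Rl xs = prod_list (map Rn xs)"

lemma concat_props:
  assumes "good a" "good b"
  shows "good (concat a b)" "Dn (concat a b) = Dn a + Rn a * Dn b"
    "Rn (concat a b) = Rn a * Rn b" "tstart (concat a b) = tstart a"
proof -
  have L: "lo (concat a b) = 0" "hi (concat a b) = (hi a - lo a) + (hi b - lo b)"
    "tstart (concat a b) = tstart a" "tend (concat a b) = tend a / tstart b * tend b"
    by (simp_all add: concat_def Let_def)
  have F0: "fn (concat a b) 0 = fn a (lo a)" using assms by (simp add: concat_def Let_def good_def)
  have FH: "fn (concat a b) (hi (concat a b)) = fn a (hi a) + tend a / tstart b * (fn b (hi b) - fn b (lo b))"
  proof (cases "hi b = lo b")
    case True then show ?thesis using assms by (simp add: concat_def Let_def good_def)
  next
    case False then show ?thesis using assms by (simp add: concat_def Let_def good_def)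
  qed
  show "good (concat a b)" using assms L by (simp add: good_def)
  show "tstart (concat a b) = tstart a" by (fact L(3))
  show "Rn (concat a b) = Rn a * Rn b" using assms L by (simp add: Rn_def good_def field_simps)
  show "Dn (concat a b) = Dn a + Rn a * Dn b"
    unfolding Dn_def Rn_def FH L(1) L(3) F0 using assms by (simp add: good_def field_simps)
qed

lemma foldl_props:
  assumes "good a" "\<forall>x\<in>set xs. good x"
  shows "good (foldl concat a xs) \<and> Dn (foldl concat a xs) = Dn a + Rn a * Dl xs
     \<and> Rn (foldl concat a xs) = Rn a * Rl xs"
  using assms
proof (induction xs arbitrary: a)
  case Nil then show ?case by (simp add: Rl_def)
next
  case (Cons x xs)
  have g: "good (concat a x)" using Cons.prems concat_props by auto
  from Cons.IH[OF g] Cons.prems show ?case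
    by (simp add: concat_props Rl_def algebra_simps)
qed

lemma Dl_append: "Dl (xs @ ys) = Dl xs + Rl xs * Dl ys"
  by (induction xs) (auto simp: Rl_def algebra_simps)

lemma Rl_append: "Rl (xs @ ys) = Rl xs * Rl ys"
  by (simp add: Rl_def)

lemma closed_iff:
  assumes "good r"
  shows "closed_C1 r \<longleftrightarrow> Dn r = 0 \<and> Rn r = 1"
  using assms by (auto simp: closed_C1_def Dn_def Rn_def good_def)

definition cyc :: "nat \<Rightarrow> nat \<Rightarrow> nat \<Rightarrow> bool" where
  "cyc a b c \<longleftrightarrow> (a < b \<and> b < c) \<or> (b < c \<and> c < a) \<or> (c < a \<and> a < b)"

lemma all_cyc_imp_Zk:
  assumes sigma: "\<sigma> permutes {1..k}" and k: "k \<ge> 1"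
    and allc: "\<And>j1 j2 j3. 1 \<le> j1 \<Longrightarrow> j1 < j2 \<Longrightarrow> j2 < j3 \<Longrightarrow> j3 \<le> k \<Longrightarrow> cyc (\<sigma> j1) (\<sigma> j2) (\<sigma> j3)"
  shows "\<sigma> \<in> Zk k"
proof -
  have bij: "bij_betw \<sigma> {1..k} {1..k}" using sigma permutes_imp_bij by blast
  have inr: "\<And>j. j \<in> {1..k} \<Longrightarrow> \<sigma> j \<in> {1..k}" using bij bij_betwE by blast
  have surj: "\<And>z. z \<in> {1..k} \<Longrightarrow> \<exists>j\<in>{1..k}. \<sigma> j = z" using bij_betw_imp_surj_on[OF bij]
    by (metis imageE)
  have inj: "\<And>i j. i \<in> {1..k} \<Longrightarrow> j \<in> {1..k} \<Longrightarrow> \<sigma> i = \<sigma> j \<Longrightarrow> i = j"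
    using inj_onD[OF bij_betw_imp_inj_on[OF bij]] by blast
  have succ: "\<sigma> (j+1) = (if \<sigma> j = k then 1 else \<sigma> j + 1)" if j: "1 \<le> j" "j < k" for j
  proof -
    define x where "x = \<sigma> j"
    define y where "y = \<sigma> (j+1)"
    have xr: "x \<in> {1..k}" "y \<in> {1..k}" using inr[of j] inr[of "j+1"] j unfolding x_def y_def by auto
    have xy: "x \<noteq> y" using inj[of j "j+1"] j x_def y_def by auto
    have P: "(z < x \<and> x < y) \<or> (x < y \<and> y < z) \<or> (y < z \<and> z < x)"
      if z: "z \<in> {1..k}" "z \<noteq> x" "z \<noteq> y" for z
    proof -
      obtain j' where j': "j' \<in> {1..k}" "\<sigma> j' = z" using surj z by blast
      have "j' \<noteq> j" "j' \<noteq> j+1" using j' z x_def y_def by auto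
      then have "j' < j \<or> j + 1 < j'" by auto
      then show ?thesis
      proof
        assume "j' < j"
        then have "cyc z x y" using allc[of j' j "j+1"] j j' x_def y_def by auto
        then show ?thesis by (auto simp: cyc_def)
      next
        assume "j + 1 < j'"
        then have "cyc x y z" using allc[of j "j+1" j'] j j' x_def y_def by auto
        then show ?thesis by (auto simp: cyc_def)
      qed
    qed
    show ?thesis
    proof (cases "x < y")
      case True
      have "y = x + 1"
      proof (rule ccontr)
        assume "y \<noteq> x + 1"
        then have "x + 1 \<in> {1..k}" "x + 1 \<noteq> x" "x + 1 \<noteq> y" using True xr by auto
        from P[OF this] True show False by auto
      qed
      then show ?thesis using xr x_def y_def by auto
    next
      case False
      then have yx: "y < x" using xy by auto
      have "y = 1"
      proof (rule ccontr)
        assume "y \<noteq> 1"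
        then have "1 \<in> {1..k}" "1 \<noteq> x" "1 \<noteq> y" using yx xr by auto
        from P[OF this] yx xr show False by auto
      qed
      moreover have "x = k"
      proof (rule ccontr)
        assume "x \<noteq> k"
        then have "k \<in> {1..k}" "k \<noteq> x" "k \<noteq> y" using yx xr k by auto
        from P[OF this] yx xr show False by auto
      qed
      ultimately show ?thesis using x_def y_def by auto
    qed
  qed
  define h where "h = \<sigma> 1 - 1"
  have s1: "\<sigma> 1 \<in> {1..k}" using inr k by auto
  have hk: "h < k" using s1 h_def by auto
  have form: "j \<le> k \<Longrightarrow> \<sigma> j = zshift k h j" if "1 \<le> j" for j
    using that
  proof (induction j rule: dec_induct)
    case base
    then show ?case using s1 h_def by (auto simp: zshift_def)
  next
    case (step n)
    then have IH: "\<sigma> n = zshift k h n" by auto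
    have st: "\<sigma> (n+1) = (if \<sigma> n = k then 1 else \<sigma> n + 1)"
      using step.hyps step.prems \<open>1 \<le> n\<close> by (intro succ) auto
    show ?case using IH st step hk by (auto simp: zshift_def split: if_splits)
  qed
  have "\<sigma> = zshift k h"
  proof
    fix j
    show "\<sigma> j = zshift k h j"
    proof (cases "j \<in> {1..k}")
      case True then show ?thesis using form by auto
    next
      case False
      have "zshift k h j = j" using False unfolding zshift_def by meson
      then show ?thesis using permutes_not_in[OF sigma False] by simp
    qed
  qed
  then show ?thesis using hk by (auto simp: Zk_def)
qed

lemma utan_eq:
  assumes deriv: "\<forall>s\<in>{0..1}. (\<gamma> has_vector_derivative \<gamma>' s) (at s within {0..1})"
    and turn: "\<forall>s\<in>{0..1}. \<gamma>' s = complex_of_real c * cis (\<theta> s)"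
    and c: "c > 0" and s: "s \<in> {0..1::real}"
  shows "utan \<gamma> s = cis (\<theta> s)"
proof -
  have "vector_derivative \<gamma> (at s within {0..1}) = \<gamma>' s"
    using vector_derivative_within_cbox[of 0 1 s \<gamma> "\<gamma>' s"] deriv s by auto
  then have "utan \<gamma> s = sgn (complex_of_real c * cis (\<theta> s))" using turn s by (simp add: utan_def)
  also have "\<dots> = cis (\<theta> s)" using c by (simp add: sgn_mult sgn_of_real)
  finally show ?thesis .
qed

lemma Dk_mono:
  assumes "C \<in> Dk k" "k \<ge> 1" "i \<le> j" "j \<le> k"
  shows "cutpt k C i \<le> cutpt k C j"
  using assms(3,4)
proof (induction j rule: dec_induct)
  case base then show ?case by simp
next
  case (step n)
  have "cutpt k C n \<le> cutpt k C (Suc n)"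
    using assms(1) step.prems unfolding Dk_def by (metis (no_types, lifting) One_nat_def add_diff_cancel_left' atLeastAtMost_iff le_add1 mem_Collect_eq plus_1_eq_Suc)
  then show ?case using step by auto
qed

lemma Dk_range:
  assumes "C \<in> Dk k" "k \<ge> 1" "i \<le> k"
  shows "0 \<le> cutpt k C i" "cutpt k C i \<le> 1"
proof -
  have "cutpt k C 0 \<le> cutpt k C i" "cutpt k C i \<le> cutpt k C k" using Dk_mono assms by auto
  moreover have "cutpt k C 0 = 0" "cutpt k C k = 1" using assms by (auto simp: cutpt_def)
  ultimately show "0 \<le> cutpt k C i" "cutpt k C i \<le> 1" by auto
qed

lemma arc_props:
  assumes ut: "\<And>s. s \<in> {0..1} \<Longrightarrow> utan \<gamma> s = cis (\<theta> s)"
    and x: "0 \<le> cutpt k C (i-1)" "cutpt k C (i-1) \<le> cutpt k C i" "cutpt k C i \<le> 1"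
  shows "good (arc \<gamma> k C i)"
    "Dn (arc \<gamma> k C i) = (\<gamma> (cutpt k C i) - \<gamma> (cutpt k C (i-1))) / cis (\<theta> (cutpt k C (i-1)))"
    "Rn (arc \<gamma> k C i) = cis (\<theta> (cutpt k C i)) / cis (\<theta> (cutpt k C (i-1)))"
  using x ut[of "cutpt k C i"] ut[of "cutpt k C (i-1)"]
  by (auto simp: good_def Dn_def Rn_def arc_def)

lemma consec:
  fixes a :: "nat \<Rightarrow> pcurve" and x :: "nat \<Rightarrow> real" and G :: "real \<Rightarrow> complex" and u :: "real \<Rightarrow> complex"
  assumes u: "\<And>t. u t \<noteq> 0" and p: "p \<ge> 1"
    and A: "\<And>i. i \<in> {p..<p+n} \<Longrightarrow> Dn (a i) = (G (x i) - G (x (i-1))) / u (x (i-1)) \<and> Rn (a i) = u (x i) / u (x (i-1))"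
  shows "Dl (map a [p..<p+n]) = (G (x (p+n-1)) - G (x (p-1))) / u (x (p-1))
     \<and> Rl (map a [p..<p+n]) = u (x (p+n-1)) / u (x (p-1))"
  using p A
proof (induction n arbitrary: p)
  case 0 then show ?case using u by (simp add: Rl_def)
next
  case (Suc n)
  define L where "L = [Suc p..<Suc p+n]"
  have l: "[p..<p+Suc n] = p # L" unfolding L_def by (simp add: upt_rec)
  have IH: "Dl (map a L) = (G (x (p+n)) - G (x p)) / u (x p)
     \<and> Rl (map a L) = u (x (p+n)) / u (x p)"
    using Suc.IH[of "Suc p"] Suc.prems unfolding L_def by auto
  have ap: "Dn (a p) = (G (x p) - G (x (p-1))) / u (x (p-1)) \<and> Rn (a p) = u (x p) / u (x (p-1))"
    using Suc.prems by auto
  have e1: "Dl (map a (p # L)) = Dn (a p) + Rn (a p) * Dl (map a L)" by simp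
  have e2: "Rl (map a (p # L)) = Rn (a p) * Rl (map a L)" by (simp add: Rl_def)
  show ?case unfolding l e1 e2 IH[THEN conjunct1] IH[THEN conjunct2] ap[THEN conjunct1] ap[THEN conjunct2]
    using u by (simp add: field_simps)
qed

lemma map_shift: "map (\<lambda>j. f (j + h)) [a..<b] = map f [a+h..<b+h]"
  by (induction b) auto

lemma const_exp:
  fixes h :: "'a::topological_space \<Rightarrow> complex"
  assumes "connected S" "continuous_on S h" "\<And>t. t \<in> S \<Longrightarrow> exp (h t) = z"
  shows "h constant_on S"
proof (rule continuous_discrete_range_constant[OF assms(1,2)])
  fix x assume x: "x \<in> S"
  show "\<exists>e>0. \<forall>y. y \<in> S \<and> h y \<noteq> h x \<longrightarrow> e \<le> norm (h y - h x)"
  proof (intro exI[of _ 1] conjI allI impI)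
    fix y assume y: "y \<in> S \<and> h y \<noteq> h x"
    then have "exp (h y) = exp (h x)" using assms(3) x by auto
    then obtain n :: int where n: "h y = h x + (of_int (2 * n) * pi) * \<i>" using exp_eq by blast
    then have "n \<noteq> 0" using y by auto
    then have "1 \<le> \<bar>real_of_int (2*n)\<bar>" by linarith
    then have "1 * 1 \<le> \<bar>real_of_int (2*n)\<bar> * pi" using pi_gt3
      by (intro mult_mono) auto
    also have "\<dots> = norm ((of_int (2 * n) * pi) * \<i> :: complex)"
      by (simp add: norm_mult)
    finally show "1 \<le> norm (h y - h x)" using n by simp
  qed simp
qed

lemma aux_conv: "a \<le> (b::real) \<Longrightarrow> aa \<le> ba \<Longrightarrow> 0 \<le> u \<Longrightarrow> u \<le> 1 \<Longrightarrow> (1-u)*a + u*aa \<le> (1-u)*b + u*ba"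
  by (intro add_mono mult_left_mono) auto

lemma winding_core:
  fixes F :: "real \<times> real \<Rightarrow> complex" and \<theta> :: "real \<Rightarrow> real"
  defines "T \<equiv> {(a,b). 0 \<le> a \<and> a \<le> b \<and> b \<le> (1::real)}"
  assumes contF: "continuous_on T F" and contth: "continuous_on {0..1} \<theta>"
    and e1: "\<And>b. b \<in> {0..1} \<Longrightarrow> F (0,b) = w"
    and e2: "\<And>a. a \<in> {0..1} \<Longrightarrow> F (a,1) = w"
    and e3: "\<And>a. a \<in> {0..1} \<Longrightarrow> F (a,a) = cis (\<theta> a) * v"
    and tt: "\<theta> 1 \<noteq> \<theta> 0"
  shows "\<exists>p\<in>T. F p = 0"
proof (rule ccontr)
  assume "\<not> (\<exists>p\<in>T. F p = 0)"
  then have nz: "\<And>p. p \<in> T \<Longrightarrow> F p \<noteq> 0" by auto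
  have "convex T" unfolding convex_alt
  proof (intro ballI allI impI)
    fix x y :: "real \<times> real" and u :: real
    assume x: "x \<in> T" and y: "y \<in> T" and u: "0 \<le> u \<and> u \<le> 1"
    obtain a b where ab: "x = (a,b)" by (cases x)
    obtain a' b' where ab': "y = (a',b')" by (cases y)
    have h: "0 \<le> a" "a \<le> b" "b \<le> 1" "0 \<le> a'" "a' \<le> b'" "b' \<le> 1"
      using x y ab ab' by (auto simp: T_def)
    have "0 \<le> (1-u)*a + u*a'" using h u by simp
    moreover have "(1-u)*a + u*a' \<le> (1-u)*b + u*b'" using h u by (intro aux_conv) auto
    moreover have "(1-u)*b + u*b' \<le> (1-u)*1 + u*1" using h u by (intro aux_conv) auto
    ultimately show "(1 - u) *\<^sub>R x + u *\<^sub>R y \<in> T" unfolding ab ab' T_def by simp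
  qed
  then have ct: "contractible T" by (rule convex_imp_contractible)
  obtain g where g: "continuous_on T g" "\<And>x. x \<in> T \<Longrightarrow> F x = exp (g x)"
    using continuous_logarithm_on_contractible[OF contF ct nz] by blast
  have m1: "(\<lambda>t. (t,t)) ` {0..1} \<subseteq> T" "(\<lambda>t. (0,t)) ` {0..1} \<subseteq> T" "(\<lambda>t. (t,1)) ` {0..1} \<subseteq> T"
    by (auto simp: T_def)
  have c0: "continuous_on {0..1} (\<lambda>t. g (t,t))"
    by (rule continuous_on_compose2[OF g(1) _ m1(1)]) (intro continuous_on_Pair continuous_on_id)
  have c1: "continuous_on {0..1} (\<lambda>t. g (t,t) - \<i> * of_real (\<theta> t))"
    by (intro continuous_on_diff c0 continuous_on_mult continuous_on_const continuous_on_of_real contth) 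
  have c2: "continuous_on {0..1} (\<lambda>t. g (0,t))"
    by (rule continuous_on_compose2[OF g(1) _ m1(2)]) (intro continuous_on_Pair continuous_on_id continuous_on_const)
  have c3: "continuous_on {0..1} (\<lambda>t. g (t,1))"
    by (rule continuous_on_compose2[OF g(1) _ m1(3)]) (intro continuous_on_Pair continuous_on_id continuous_on_const)
  have k1: "(\<lambda>t. g (t,t) - \<i> * of_real (\<theta> t)) constant_on {0..1}"
  proof (rule const_exp[OF _ c1])
    fix t :: real assume t: "t \<in> {0..1}"
    have "exp (g (t,t)) = cis (\<theta> t) * v" using g(2)[of "(t,t)"] e3[OF t] t by (auto simp: T_def)
    then show "exp (g (t,t) - \<i> * of_real (\<theta> t)) = v"
      by (simp add: exp_diff cis_conv_exp)
  qed simp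
  have k2: "(\<lambda>t. g (0,t)) constant_on {0..1}"
  proof (rule const_exp[OF _ c2])
    fix t :: real assume t: "t \<in> {0..1}"
    show "exp (g (0,t)) = w" using g(2)[of "(0,t)"] e1[OF t] t by (auto simp: T_def)
  qed simp
  have k3: "(\<lambda>t. g (t,1)) constant_on {0..1}"
  proof (rule const_exp[OF _ c3])
    fix t :: real assume t: "t \<in> {0..1}"
    show "exp (g (t,1)) = w" using g(2)[of "(t,1)"] e2[OF t] t by (auto simp: T_def)
  qed simp
  obtain y2 where y2: "\<And>t. t \<in> {0..1} \<Longrightarrow> g (0,t) = y2" using k2 unfolding constant_on_def by blast
  obtain y3 where y3: "\<And>t. t \<in> {0..1} \<Longrightarrow> g (t,1) = y3" using k3 unfolding constant_on_def by blast
  obtain y1 where y1: "\<And>t. t \<in> {0..1} \<Longrightarrow> g (t,t) - \<i> * of_real (\<theta> t) = y1" using k1 unfolding constant_on_def by blast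
  have "g (0,0) = g (0,1)" using y2[of 0] y2[of 1] by simp
  also have "\<dots> = g (1,1)" using y3[of 0] y3[of 1] by simp
  finally have "g (0,0) = g (1,1)" .
  moreover have "g (0,0) - \<i> * of_real (\<theta> 0) = g (1,1) - \<i> * of_real (\<theta> 1)"
    using y1[of 0] y1[of 1] by simp
  ultimately have "\<theta> 0 = \<theta> 1" by (simp add: complex_eq_iff)
  then show False using tt by simp
qed

abbreviation PT :: "nat \<Rightarrow> (nat \<Rightarrow> real) topology" where
  "PT k \<equiv> product_topology (\<lambda>_. euclideanreal) {1..k-1}"

lemma cutpt_cont:
  assumes "i \<le> k"
  shows "continuous_map (PT k) euclideanreal (\<lambda>C. cutpt k C i)"
proof (cases "i = 0 \<or> i = k")
  case True
  then show ?thesis by (auto simp: cutpt_def)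
next
  case False
  then have "i \<in> {1..k-1}" using assms by auto
  then have "continuous_map (PT k) euclideanreal (\<lambda>C. C i)"
    using continuous_map_product_projection[of i "{1..k-1}" "\<lambda>_. euclideanreal"] by simp
  then show ?thesis using False by (simp add: cutpt_def)
qed

lemma Dk_closed:
  assumes "k \<ge> 1"
  shows "closedin (PT k) (Dk k)"
proof -
  define S where "S i = {C \<in> topspace (PT k). cutpt k C i - cutpt k C (i-1) \<in> {0..}}" for i
  have "closedin (PT k) (S i)" if "i \<in> {1..k}" for i
    unfolding S_def
  proof (rule closedin_continuous_map_preimage[where Y=euclideanreal])
    show "continuous_map (PT k) euclideanreal (\<lambda>C. cutpt k C i - cutpt k C (i - 1))"
      using that by (intro continuous_map_diff cutpt_cont) auto
    show "closedin euclideanreal {0::real..}" by simp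
  qed
  then have "closedin (PT k) (\<Inter> (S ` {1..k}))" using assms by (intro closedin_Inter) auto
  moreover have "\<Inter> (S ` {1..k}) = Dk k"
    using assms by (auto simp: S_def Dk_def topspace_product_topology)
  ultimately show ?thesis by simp
qed

lemma boundary_pt:
  assumes C: "C \<in> Dk k" and k: "k \<ge> 2" and i: "i \<in> {1..k}"
    and deg: "cutpt k C (i-1) = cutpt k C i"
  shows "C \<in> Dk_boundary k"
proof -
  have sub: "Dk k \<subseteq> topspace (PT k)" by (auto simp: Dk_def topspace_product_topology)
  have cl: "C \<in> PT k closure_of Dk k" using closure_of_subset[OF sub] C by auto
  have ni: "C \<notin> PT k interior_of Dk k"
  proof
    assume "C \<in> PT k interior_of Dk k"
    then obtain T where T: "openin (PT k) T" "C \<in> T" "T \<subseteq> Dk k" by (auto simp: interior_of_def)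
    have "\<forall>x\<in>T. \<exists>U. finite {i \<in> {1..k-1}. U i \<noteq> topspace euclideanreal} \<and>
                 (\<forall>i \<in> {1..k-1}. openin euclideanreal (U i)) \<and> x \<in> Pi\<^sub>E {1..k-1} U \<and> Pi\<^sub>E {1..k-1} U \<subseteq> T"
      using T(1) by (simp only: openin_product_topology_alt)
    then obtain U where U: "\<forall>j\<in>{1..k-1}. openin euclideanreal (U j)" "C \<in> PiE {1..k-1} U"
        "PiE {1..k-1} U \<subseteq> T"
      using T(2) by blast
    define j where "j = (if i = k then k - 1 else i)"
    define s :: real where "s = (if i = k then 1 else -1)"
    have j: "j \<in> {1..k-1}" using i k j_def by auto
    have "open (U j)" using U(1) j by simp
    moreover have "C j \<in> U j" using U(2) j by (auto simp: PiE_def Pi_def)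
    ultimately obtain e where e: "e > 0" "ball (C j) e \<subseteq> U j" using open_contains_ball by blast
    define C' where "C' = C(j := C j + s * e / 2)"
    have "C j + s * e / 2 \<in> ball (C j) e" using e s_def by (auto simp: dist_real_def)
    then have "C' j \<in> U j" using e unfolding C'_def by auto
    moreover have "\<forall>l\<in>{1..k-1}. l \<noteq> j \<longrightarrow> C' l \<in> U l" using U(2) unfolding C'_def by (simp add: PiE_iff)
    moreover have "C' \<in> extensional {1..k-1}" using U(2) j unfolding C'_def
      by (simp add: PiE_iff extensional_def)
    ultimately have "C' \<in> PiE {1..k-1} U" by (metis PiE_iff)
    then have "C' \<in> Dk k" using U(3) T(3) by auto
    then have le: "cutpt k C' (i-1) \<le> cutpt k C' i" using i by (auto simp: Dk_def)
    show False
    proof (cases "i = k")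
      case True
      have "cutpt k C' (i-1) = cutpt k C (i-1) + e/2" using True j_def s_def k j
        by (auto simp: cutpt_def C'_def)
      moreover have "cutpt k C' i = cutpt k C i" using True by (auto simp: cutpt_def)
      ultimately show False using le deg e by auto
    next
      case False
      have "cutpt k C' (i-1) = cutpt k C (i-1)" using False j_def i
        by (auto simp: cutpt_def C'_def)
      moreover have "cutpt k C' i = cutpt k C i - e/2" using False j_def s_def i
        by (auto simp: cutpt_def C'_def)
      ultimately show False using le deg e by auto
    qed
  qed
  show ?thesis using cl ni by (simp add: Dk_boundary_def frontier_of_def)
qed

lemma filter_triv:
  assumes "\<forall>j\<in>set xs. \<not> P j \<longrightarrow> Dn (f j) = 0 \<and> Rn (f j) = 1"
  shows "Dl (map f (filter P xs)) = Dl (map f xs) \<and> Rl (map f (filter P xs)) = Rl (map f xs)"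
  using assms by (induction xs) (auto simp: Rl_def)

lemma constr:
  fixes p q r k :: nat and a b :: real
  assumes pqr: "1 \<le> p" "p < q" "q < r" "r \<le> k" and k: "k \<ge> 4"
    and ab: "0 \<le> a" "a \<le> b" "b \<le> 1"
  defines "\<phi> \<equiv> (\<lambda>i::nat. if i < p then 0 else if i < q then a else if i < r then b else (1::real))"
  defines "C \<equiv> restrict \<phi> {1..k-1}"
  shows "\<And>i. i \<le> k \<Longrightarrow> cutpt k C i = \<phi> i" "C \<in> Dk k" "C \<in> Dk_boundary k"
proof -
  show cp: "cutpt k C i = \<phi> i" if "i \<le> k" for i
    using that pqr unfolding cutpt_def C_def \<phi>_def by auto
  have mono: "\<phi> (i-1) \<le> \<phi> i" for i
    using ab unfolding \<phi>_def by auto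
  have "C \<in> PiE {1..k-1} (\<lambda>_. UNIV)" unfolding C_def by simp
  moreover have "\<forall>i\<in>{1..k}. cutpt k C (i - 1) \<le> cutpt k C i"
    using cp mono by auto
  ultimately show CD: "C \<in> Dk k" by (simp add: Dk_def)
  have "\<not> {1..k} \<subseteq> {p,q,r}"
  proof
    assume "{1..k} \<subseteq> {p,q,r}"
    then have "card {1..k} \<le> card {p,q,r}" by (intro card_mono) auto
    also have "\<dots> \<le> 3" using pqr by simp
    finally show False using k by simp
  qed
  then obtain i where i: "i \<in> {1..k}" "i \<noteq> p" "i \<noteq> q" "i \<noteq> r" by blast
  have "\<phi> (i-1) = \<phi> i" using i pqr unfolding \<phi>_def by auto
  then have "cutpt k C (i-1) = cutpt k C i" using cp i by auto
  then show "C \<in> Dk_boundary k" using boundary_pt[OF CD _ i(1)] k by auto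
qed

lemma rc_lemma:
  assumes sigma: "\<sigma> permutes {1..k}" and k1: "k \<ge> 1"
    and ut: "\<And>s. s \<in> {0..1} \<Longrightarrow> utan \<gamma> s = cis (\<theta> s)"
    and C: "C \<in> Dk k"
  shows "good (rcurve \<gamma> k \<sigma> C) \<and> Dn (rcurve \<gamma> k \<sigma> C) = Dl (map (\<lambda>j. arc \<gamma> k C (\<sigma> j)) [1..<k+1])
     \<and> Rn (rcurve \<gamma> k \<sigma> C) = Rl (map (\<lambda>j. arc \<gamma> k C (\<sigma> j)) [1..<k+1])"
proof -
  have ga: "good (arc \<gamma> k C i)" if "i \<in> {1..k}" for i
    using that Dk_range[OF C k1, of "i-1"] Dk_range[OF C k1, of i] Dk_mono[OF C k1, of "i-1" i]
    by (intro arc_props(1)[OF ut]) auto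
  have sj: "\<sigma> j \<in> {1..k}" if "j \<in> {1..k}" for j
    using that permutes_in_image[OF sigma] by blast
  have g1: "good (arc \<gamma> k C (\<sigma> 1))" using ga sj k1 by auto
  have gs: "\<forall>x\<in>set (map (\<lambda>j. arc \<gamma> k C (\<sigma> j)) [2..<k+1]). good x" using ga sj by auto
  have l: "[1..<k+1] = 1 # [2..<k+1]" using k1 upt_conv_Cons[of 1 "k+1"] by (simp add: numeral_2_eq_2)
  show ?thesis using foldl_props[OF g1 gs] unfolding rcurve_def l by (simp add: Rl_def del: upt_Suc)
qed

lemma alg1: "(A::complex) \<noteq> 0 \<Longrightarrow> B \<noteq> 0 \<Longrightarrow> (g1 - g) / A + B / A * ((g - g0) / B) = (g1 - g0) / A"
  by (simp add: field_simps)

lemma dir1: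
  assumes sigma: "\<sigma> permutes {1..k}" and k1: "k \<ge> 1"
    and ut: "\<And>s. s \<in> {0..1} \<Longrightarrow> utan \<gamma> s = cis (\<theta> s)"
    and u01: "cis (\<theta> 1) = cis (\<theta> 0)"
    and nc: "\<gamma> 0 \<noteq> \<gamma> 1"
    and C: "C \<in> Dk k" and h: "h < k" and sz: "\<sigma> = zshift k h"
  shows "Dn (rcurve \<gamma> k \<sigma> C) \<noteq> 0"
proof -
  define x where "x = cutpt k C"
  define f where "f = arc \<gamma> k C"
  have A: "Dn (f i) = (\<gamma> (x i) - \<gamma> (x (i-1))) / cis (\<theta> (x (i-1))) \<and> Rn (f i) = cis (\<theta> (x i)) / cis (\<theta> (x (i-1)))"
    if "i \<in> {1..k}" for i
    using that Dk_range[OF C k1, of "i-1"] Dk_range[OF C k1, of i] Dk_mono[OF C k1, of "i-1" i]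
    unfolding f_def x_def by (intro conjI arc_props(2,3)[OF ut]) auto
  have l: "[1..<k+1] = [1..<(k-h)+1] @ [(k-h)+1..<(k-h)+1+h]"
    using h upt_add_eq_append[of 1 "k-h+1" h] by simp
  have m1: "map (\<lambda>j. f (\<sigma> j)) [1..<(k-h)+1] = map f [h+1..<k+1]"
  proof -
    have "map (\<lambda>j. f (\<sigma> j)) [1..<(k-h)+1] = map (\<lambda>j. f (j + h)) [1..<(k-h)+1]"
      by (rule map_cong) (auto simp: sz zshift_def)
    also have "\<dots> = map f [1+h..<(k-h)+1+h]" by (rule map_shift)
    finally show ?thesis using h by (simp add: add.commute)
  qed
  have m2: "map (\<lambda>j. f (\<sigma> j)) [(k-h)+1..<(k-h)+1+h] = map f [1..<h+1]"
  proof -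
    have "map f [1..<h+1] = map (\<lambda>j. f (\<sigma> (j + (k-h)))) [1..<h+1]"
      by (rule map_cong) (use h in \<open>auto simp: sz zshift_def\<close>)
    also have "\<dots> = map (\<lambda>j. f (\<sigma> j)) [1+(k-h)..<h+1+(k-h)]" by (rule map_shift)
    finally show ?thesis by (simp add: add.commute add.left_commute)
  qed
  have c1: "Dl (map f [h+1..<(h+1)+(k-h)]) = (\<gamma> (x ((h+1)+(k-h)-1)) - \<gamma> (x ((h+1)-1))) / cis (\<theta> (x ((h+1)-1)))
     \<and> Rl (map f [h+1..<(h+1)+(k-h)]) = cis (\<theta> (x ((h+1)+(k-h)-1))) / cis (\<theta> (x ((h+1)-1)))"
    by (rule consec[where u="\<lambda>s. cis (\<theta> s)"]) (use A h in auto)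
  have c2: "Dl (map f [1..<1+h]) = (\<gamma> (x (1+h-1)) - \<gamma> (x (1-1))) / cis (\<theta> (x (1-1)))"
    using consec[where u="\<lambda>s. cis (\<theta> s)" and p=1 and n=h and a=f and G=\<gamma> and x=x] A h by auto
  have e1: "(h+1)+(k-h) = k+1" "(h+1)+(k-h)-1 = k" using h by auto
  have e2: "(h+1)-1 = h" by simp
  have xk: "x k = 1" "x 0 = 0" using k1 by (auto simp: x_def cutpt_def)
  have c1': "Dl (map f [h+1..<k+1]) = (\<gamma> 1 - \<gamma> (x h)) / cis (\<theta> (x h))
     \<and> Rl (map f [h+1..<k+1]) = cis (\<theta> 1) / cis (\<theta> (x h))"
    using c1 unfolding e1(2) e2 unfolding e1(1) xk .
  have c2': "Dl (map f [1..<h+1]) = (\<gamma> (x h) - \<gamma> 0) / cis (\<theta> 0)"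
    using c2 xk by (simp add: add.commute[of 1 h])
  have meq: "map (\<lambda>j. f (\<sigma> j)) [1..<k+1] = map f [h+1..<k+1] @ map f [1..<h+1]"
    unfolding l map_append m1 m2 ..
  have "Dn (rcurve \<gamma> k \<sigma> C) = Dl (map (\<lambda>j. f (\<sigma> j)) [1..<k+1])"
    using rc_lemma[OF sigma k1 ut C] unfolding f_def by blast
  also have "\<dots> = Dl (map f [h+1..<k+1] @ map f [1..<h+1])"
    unfolding meq ..
  also have "\<dots> = (\<gamma> 1 - \<gamma> (x h)) / cis (\<theta> (x h)) + cis (\<theta> 1) / cis (\<theta> (x h)) * ((\<gamma> (x h) - \<gamma> 0) / cis (\<theta> 0))"
    unfolding Dl_append c1'[THEN conjunct1] c1'[THEN conjunct2] c2' ..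
  also have "\<dots> = (\<gamma> 1 - \<gamma> 0) / cis (\<theta> (x h))"
    unfolding u01 by (rule alg1) simp_all
  finally show ?thesis using nc by simp
qed

lemma alg_BAC: assumes "(ua::complex) \<noteq> 0" "ub \<noteq> 0" "u0 \<noteq> 0"
  "u0 * (gb - ga) + ub * (ga - g0) + ua * (g1 - gb) = 0"
  shows "(gb - ga) / ua + ub / ua * ((ga - g0) / u0 + ua / u0 * ((g1 - gb) / ub)) = 0"
proof -
  have "(gb - ga) / ua + ub / ua * ((ga - g0) / u0 + ua / u0 * ((g1 - gb) / ub))
     = (u0 * (gb - ga) + ub * (ga - g0) + ua * (g1 - gb)) / (ua * u0)"
    using assms(1-3) by (simp add: field_simps)
  then show ?thesis using assms(4) by simp
qed

lemma alg_ACB: assumes "(ua::complex) \<noteq> 0" "ub \<noteq> 0" "u0 \<noteq> 0"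
  "u0 * (gb - ga) + ub * (ga - g0) + ua * (g1 - gb) = 0"
  shows "(ga - g0) / u0 + ua / u0 * ((g1 - gb) / ub + u0 / ub * ((gb - ga) / ua)) = 0"
proof -
  have "(ga - g0) / u0 + ua / u0 * ((g1 - gb) / ub + u0 / ub * ((gb - ga) / ua))
     = (u0 * (gb - ga) + ub * (ga - g0) + ua * (g1 - gb)) / (ub * u0)"
    using assms(1-3) by (simp add: field_simps)
  then show ?thesis using assms(4) by simp
qed

lemma alg_CBA: assumes "(ua::complex) \<noteq> 0" "ub \<noteq> 0" "u0 \<noteq> 0"
  "u0 * (gb - ga) + ub * (ga - g0) + ua * (g1 - gb) = 0"
  shows "(g1 - gb) / ub + u0 / ub * ((gb - ga) / ua + ub / ua * ((ga - g0) / u0)) = 0"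
proof -
  have "(g1 - gb) / ub + u0 / ub * ((gb - ga) / ua + ub / ua * ((ga - g0) / u0))
     = (u0 * (gb - ga) + ub * (ga - g0) + ua * (g1 - gb)) / (ub * ua)"
    using assms(1-3) by (simp add: field_simps)
  then show ?thesis using assms(4) by simp
qed

lemma key:
  fixes p q r k :: nat and a b :: real
  assumes sigma: "\<sigma> permutes {1..k}" and k: "k \<ge> 4"
    and ut: "\<And>s. s \<in> {0..1} \<Longrightarrow> utan \<gamma> s = cis (\<theta> s)"
    and u01: "cis (\<theta> 1) = cis (\<theta> 0)"
    and pqr: "1 \<le> p" "p < q" "q < r" "r \<le> k"
    and ab: "0 \<le> a" "a \<le> b" "b \<le> 1"
    and js: "1 \<le> j1" "j1 < j2" "j2 < j3" "j3 \<le> k"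
    and XYZ: "{\<sigma> j1, \<sigma> j2, \<sigma> j3} = {p, q, r}"
  defines "dd \<equiv> (\<lambda>i. if i = p then (\<gamma> a - \<gamma> 0) / cis (\<theta> 0) else if i = q then (\<gamma> b - \<gamma> a) / cis (\<theta> a)
              else (\<gamma> 1 - \<gamma> b) / cis (\<theta> b))"
  defines "rr \<equiv> (\<lambda>i. if i = p then cis (\<theta> a) / cis (\<theta> 0) else if i = q then cis (\<theta> b) / cis (\<theta> a)
              else cis (\<theta> 1) / cis (\<theta> b))"
  assumes S: "dd (\<sigma> j1) + rr (\<sigma> j1) * (dd (\<sigma> j2) + rr (\<sigma> j2) * dd (\<sigma> j3)) = 0"
  shows "\<exists>C\<in>Dk_boundary k. closed_C1 (rcurve \<gamma> k \<sigma> C)"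
proof -
  define \<phi> where "\<phi> = (\<lambda>i::nat. if i < p then 0 else if i < q then a else if i < r then b else (1::real))"
  define C where "C = restrict \<phi> {1..k-1}"
  have cp: "\<And>i. i \<le> k \<Longrightarrow> cutpt k C i = \<phi> i" and CD: "C \<in> Dk k" and CB: "C \<in> Dk_boundary k"
    using constr[OF pqr k ab] unfolding \<phi>_def C_def by auto
  have k1: "k \<ge> 1" using k by simp
  define f where "f = arc \<gamma> k C"
  have A: "Dn (f i) = (\<gamma> (\<phi> i) - \<gamma> (\<phi> (i-1))) / cis (\<theta> (\<phi> (i-1))) \<and> Rn (f i) = cis (\<theta> (\<phi> i)) / cis (\<theta> (\<phi> (i-1)))"
    if "i \<in> {1..k}" for i
  proof -
    have e: "cutpt k C i = \<phi> i" "cutpt k C (i-1) = \<phi> (i-1)" using cp that by auto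
    have "Dn (f i) = (\<gamma> (cutpt k C i) - \<gamma> (cutpt k C (i-1))) / cis (\<theta> (cutpt k C (i-1))) \<and> Rn (f i) = cis (\<theta> (cutpt k C i)) / cis (\<theta> (cutpt k C (i-1)))"
      using that Dk_range[OF CD k1, of "i-1"] Dk_range[OF CD k1, of i] Dk_mono[OF CD k1, of "i-1" i]
      unfolding f_def by (intro conjI arc_props(2,3)[OF ut]) auto
    then show ?thesis unfolding e .
  qed
  have Apqr: "Dn (f i) = dd i \<and> Rn (f i) = rr i" if "i \<in> {p,q,r}" for i
  proof -
    have i: "i \<in> {1..k}" using that pqr by auto
    show ?thesis using A[OF i] that pqr unfolding dd_def rr_def \<phi>_def by auto
  qed
  have Aoth: "Dn (f i) = 0 \<and> Rn (f i) = 1" if "i \<in> {1..k}" "i \<notin> {p,q,r}" for i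
  proof -
    have "\<phi> (i-1) = \<phi> i" using that pqr unfolding \<phi>_def by auto
    then show ?thesis using A[OF that(1)] by simp
  qed
  have inj: "inj \<sigma>" using sigma permutes_inj by blast
  have sj: "\<sigma> j \<in> {1..k}" if "j \<in> {1..k}" for j
    using that permutes_in_image[OF sigma] by blast
  define P where "P = (\<lambda>j. j = j1 \<or> j = j2 \<or> j = j3)"
  have triv: "\<forall>j\<in>set [1..<k+1]. \<not> P j \<longrightarrow> Dn (f (\<sigma> j)) = 0 \<and> Rn (f (\<sigma> j)) = 1"
  proof (intro ballI impI)
    fix j assume j: "j \<in> set [1..<k+1]" "\<not> P j"
    have jn: "j \<noteq> j1" "j \<noteq> j2" "j \<noteq> j3" using j(2) by (auto simp: P_def)
    have nn0: "\<sigma> j \<notin> {\<sigma> j1, \<sigma> j2, \<sigma> j3}" using jn inj_eq[OF inj] by simp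
    have nn: "\<sigma> j \<notin> {p,q,r}" using nn0 XYZ by (simp only: not_False_eq_True)
    have jk: "j \<in> {1..k}" using j(1) by auto
    have ink: "\<sigma> j \<in> {1..k}" by (rule sj[OF jk])
    show "Dn (f (\<sigma> j)) = 0 \<and> Rn (f (\<sigma> j)) = 1" by (rule Aoth[OF ink nn])
  qed
  have filt: "filter P [1..<k+1] = [j1, j2, j3]"
  proof (rule sorted_distinct_set_unique)
    show "sorted (filter P [1..<k+1])" by (rule sorted_wrt_filter) (rule sorted_upt)
    show "distinct (filter P [1..<k+1])" by (rule distinct_filter) (rule distinct_upt)
    show "sorted [j1, j2, j3]" using js by simp
    show "distinct [j1, j2, j3]" using js by simp
    have "{j \<in> {1..<k+1}. j = j1 \<or> j = j2 \<or> j = j3} = {j1, j2, j3}" using js by auto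
    then show "set (filter P [1..<k + 1]) = set [j1, j2, j3]" unfolding set_filter set_upt P_def by simp
  qed
  define g where "g = (\<lambda>j. f (\<sigma> j))"
  have rc: "good (rcurve \<gamma> k \<sigma> C) \<and> Dn (rcurve \<gamma> k \<sigma> C) = Dl (map g [1..<k+1])
     \<and> Rn (rcurve \<gamma> k \<sigma> C) = Rl (map g [1..<k+1])"
    using rc_lemma[OF sigma k1 ut CD] unfolding f_def g_def by blast
  have ft: "Dl (map g (filter P [1..<k+1])) = Dl (map g [1..<k+1])
     \<and> Rl (map g (filter P [1..<k+1])) = Rl (map g [1..<k+1])"
    unfolding g_def by (rule filter_triv[OF triv])
  have sub: "{\<sigma> j1, \<sigma> j2, \<sigma> j3} \<subseteq> {p,q,r}" using XYZ by (rule equalityD1)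
  have in3: "\<sigma> j1 \<in> {p,q,r}" "\<sigma> j2 \<in> {p,q,r}" "\<sigma> j3 \<in> {p,q,r}" using sub by blast+
  have g3: "map g [j1, j2, j3] = [f (\<sigma> j1), f (\<sigma> j2), f (\<sigma> j3)]" by (simp add: g_def)
  have "Dn (rcurve \<gamma> k \<sigma> C) = Dl (map g [j1, j2, j3])"
    using rc ft unfolding filt by simp
  also have "\<dots> = dd (\<sigma> j1) + rr (\<sigma> j1) * (dd (\<sigma> j2) + rr (\<sigma> j2) * dd (\<sigma> j3))"
    unfolding g3 using Apqr[OF in3(1)] Apqr[OF in3(2)] Apqr[OF in3(3)] by simp
  finally have D3: "Dn (rcurve \<gamma> k \<sigma> C) = 0" using S by simp
  have d3: "distinct [\<sigma> j1, \<sigma> j2, \<sigma> j3]" using js injD[OF inj] by fastforce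
  have "Rn (rcurve \<gamma> k \<sigma> C) = Rl (map g [j1, j2, j3])"
    using rc ft unfolding filt by simp
  also have "\<dots> = rr (\<sigma> j1) * rr (\<sigma> j2) * rr (\<sigma> j3)"
    unfolding g3 using Apqr[OF in3(1)] Apqr[OF in3(2)] Apqr[OF in3(3)] by (simp add: Rl_def)
  also have "\<dots> = prod rr {\<sigma> j1, \<sigma> j2, \<sigma> j3}" using d3 by simp
  also have "\<dots> = prod rr {p, q, r}" unfolding XYZ ..
  also have "\<dots> = rr p * rr q * rr r" using pqr by simp
  also have "\<dots> = 1"
  proof -
    have "rr p = cis (\<theta> a) / cis (\<theta> 0)" "rr q = cis (\<theta> b) / cis (\<theta> a)" "rr r = cis (\<theta> 0) / cis (\<theta> b)"
      using pqr u01 unfolding rr_def by auto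
    then show ?thesis by simp
  qed
  finally have R1: "Rn (rcurve \<gamma> k \<sigma> C) = 1" .
  have "closed_C1 (rcurve \<gamma> k \<sigma> C)" using closed_iff[of "rcurve \<gamma> k \<sigma> C"] rc D3 R1 by blast
  then show ?thesis using CB by blast
qed

lemma dir2:
  assumes sigma: "\<sigma> permutes {1..k}" and k: "k \<ge> 4"
    and ut: "\<And>s. s \<in> {0..1} \<Longrightarrow> utan \<gamma> s = cis (\<theta> s)"
    and u01: "cis (\<theta> 1) = cis (\<theta> 0)"
    and contG: "continuous_on {0..1} \<gamma>" and contth: "continuous_on {0..1} \<theta>"
    and tt: "\<theta> 1 \<noteq> \<theta> 0" and nZ: "\<sigma> \<notin> Zk k"
  shows "\<exists>C\<in>Dk_boundary k. closed_C1 (rcurve \<gamma> k \<sigma> C)"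
proof -
  have k1: "k \<ge> 1" using k by simp
  obtain j1 j2 j3 where js: "1 \<le> j1" "j1 < j2" "j2 < j3" "j3 \<le> k"
    and nc3: "\<not> cyc (\<sigma> j1) (\<sigma> j2) (\<sigma> j3)"
  proof -
    have "\<not> (\<forall>j1 j2 j3. 1 \<le> j1 \<longrightarrow> j1 < j2 \<longrightarrow> j2 < j3 \<longrightarrow> j3 \<le> k \<longrightarrow> cyc (\<sigma> j1) (\<sigma> j2) (\<sigma> j3))"
    proof
      assume H: "\<forall>j1 j2 j3. 1 \<le> j1 \<longrightarrow> j1 < j2 \<longrightarrow> j2 < j3 \<longrightarrow> j3 \<le> k \<longrightarrow> cyc (\<sigma> j1) (\<sigma> j2) (\<sigma> j3)"
      have "\<sigma> \<in> Zk k" by (rule all_cyc_imp_Zk[OF sigma k1]) (use H in simp)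
      then show False using nZ by simp
    qed
    then show ?thesis using that by auto
  qed
  obtain X Y Z where X: "\<sigma> j1 = X" and Y: "\<sigma> j2 = Y" and Z: "\<sigma> j3 = Z" by blast
  have inj: "inj \<sigma>" using sigma permutes_inj by blast
  have dXYZ: "X \<noteq> Y" "Y \<noteq> Z" "X \<noteq> Z" using js unfolding X[symmetric] Y[symmetric] Z[symmetric] inj_eq[OF inj] by auto
  have rXYZ: "X \<in> {1..k}" "Y \<in> {1..k}" "Z \<in> {1..k}"
    using js unfolding X[symmetric] Y[symmetric] Z[symmetric] permutes_in_image[OF sigma] by auto
  define T where "T = {(a,b). 0 \<le> a \<and> a \<le> b \<and> b \<le> (1::real)}"
  define F where "F = (\<lambda>z::real\<times>real. cis (\<theta> 0) * (\<gamma> (snd z) - \<gamma> (fst z)) + cis (\<theta> (snd z)) * (\<gamma> (fst z) - \<gamma> 0)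
      + cis (\<theta> (fst z)) * (\<gamma> 1 - \<gamma> (snd z)))"
  have fT: "fst ` T \<subseteq> {0..1}" "snd ` T \<subseteq> {0..1}" by (auto simp: T_def)
  have c1: "continuous_on T (\<lambda>z. \<gamma> (fst z))"
    by (rule continuous_on_compose2[OF contG _ fT(1)]) (intro continuous_intros)
  have c2: "continuous_on T (\<lambda>z. \<gamma> (snd z))"
    by (rule continuous_on_compose2[OF contG _ fT(2)]) (intro continuous_intros)
  have c3: "continuous_on T (\<lambda>z. \<theta> (fst z))"
    by (rule continuous_on_compose2[OF contth _ fT(1)]) (intro continuous_intros)
  have c4: "continuous_on T (\<lambda>z. \<theta> (snd z))"
    by (rule continuous_on_compose2[OF contth _ fT(2)]) (intro continuous_intros)
  have contF: "continuous_on T F" unfolding F_def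
    by (intro continuous_on_add continuous_on_mult continuous_on_diff continuous_on_const continuous_on_cis c1 c2 c3 c4)
  have "\<exists>p\<in>{(a,b). 0 \<le> a \<and> a \<le> b \<and> b \<le> (1::real)}. F p = 0"
  proof (rule winding_core[where w="cis (\<theta> 0) * (\<gamma> 1 - \<gamma> 0)" and v="\<gamma> 1 - \<gamma> 0", OF _ contth _ _ _ tt])
    show "continuous_on {(a,b). 0 \<le> a \<and> a \<le> b \<and> b \<le> (1::real)} F" using contF by (simp add: T_def)
    show "F (0, b) = cis (\<theta> 0) * (\<gamma> 1 - \<gamma> 0)" for b by (simp add: F_def algebra_simps)
    show "F (a, 1) = cis (\<theta> 0) * (\<gamma> 1 - \<gamma> 0)" for a by (simp add: F_def u01 algebra_simps)
    show "F (a, a) = cis (\<theta> a) * (\<gamma> 1 - \<gamma> 0)" for a by (simp add: F_def algebra_simps)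
  qed
  then obtain a b where ab: "0 \<le> a" "a \<le> b" "b \<le> (1::real)" and Fab0: "F (a,b) = 0" by auto
  have Fab: "cis (\<theta> 0) * (\<gamma> b - \<gamma> a) + cis (\<theta> b) * (\<gamma> a - \<gamma> 0) + cis (\<theta> a) * (\<gamma> 1 - \<gamma> b) = 0"
    using Fab0 by (simp add: F_def)
  have nz: "cis (\<theta> a) \<noteq> 0" "cis (\<theta> b) \<noteq> 0" "cis (\<theta> 0) \<noteq> 0" by auto
  have "(Y < X \<and> X < Z) \<or> (X < Z \<and> Z < Y) \<or> (Z < Y \<and> Y < X)"
    using nc3 dXYZ X Y Z unfolding cyc_def by linarith
  then show ?thesis
  proof (elim disjE conjE)
    assume o: "Y < X" "X < Z"
    show ?thesis
    proof (rule key[OF sigma k ut u01 _ o(1) o(2) _ ab js])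
      show "1 \<le> Y" "Z \<le> k" using rXYZ by auto
      show "{\<sigma> j1, \<sigma> j2, \<sigma> j3} = {Y, X, Z}" using X Y Z by auto
      show "(\<lambda>i. if i = Y then (\<gamma> a - \<gamma> 0) / cis (\<theta> 0) else if i = X then (\<gamma> b - \<gamma> a) / cis (\<theta> a) else (\<gamma> 1 - \<gamma> b) / cis (\<theta> b)) (\<sigma> j1) +
        (\<lambda>i. if i = Y then cis (\<theta> a) / cis (\<theta> 0) else if i = X then cis (\<theta> b) / cis (\<theta> a) else cis (\<theta> 1) / cis (\<theta> b)) (\<sigma> j1) *
        ((\<lambda>i. if i = Y then (\<gamma> a - \<gamma> 0) / cis (\<theta> 0) else if i = X then (\<gamma> b - \<gamma> a) / cis (\<theta> a) else (\<gamma> 1 - \<gamma> b) / cis (\<theta> b)) (\<sigma> j2) +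
         (\<lambda>i. if i = Y then cis (\<theta> a) / cis (\<theta> 0) else if i = X then cis (\<theta> b) / cis (\<theta> a) else cis (\<theta> 1) / cis (\<theta> b)) (\<sigma> j2) *
         (\<lambda>i. if i = Y then (\<gamma> a - \<gamma> 0) / cis (\<theta> 0) else if i = X then (\<gamma> b - \<gamma> a) / cis (\<theta> a) else (\<gamma> 1 - \<gamma> b) / cis (\<theta> b)) (\<sigma> j3)) = 0"
        using alg_BAC[OF nz Fab] dXYZ unfolding X Y Z by simp
    qed
  next
    assume o: "X < Z" "Z < Y"
    show ?thesis
    proof (rule key[OF sigma k ut u01 _ o(1) o(2) _ ab js])
      show "1 \<le> X" "Y \<le> k" using rXYZ by auto
      show "{\<sigma> j1, \<sigma> j2, \<sigma> j3} = {X, Z, Y}" using X Y Z by auto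
      show "(\<lambda>i. if i = X then (\<gamma> a - \<gamma> 0) / cis (\<theta> 0) else if i = Z then (\<gamma> b - \<gamma> a) / cis (\<theta> a) else (\<gamma> 1 - \<gamma> b) / cis (\<theta> b)) (\<sigma> j1) +
        (\<lambda>i. if i = X then cis (\<theta> a) / cis (\<theta> 0) else if i = Z then cis (\<theta> b) / cis (\<theta> a) else cis (\<theta> 1) / cis (\<theta> b)) (\<sigma> j1) *
        ((\<lambda>i. if i = X then (\<gamma> a - \<gamma> 0) / cis (\<theta> 0) else if i = Z then (\<gamma> b - \<gamma> a) / cis (\<theta> a) else (\<gamma> 1 - \<gamma> b) / cis (\<theta> b)) (\<sigma> j2) +
         (\<lambda>i. if i = X then cis (\<theta> a) / cis (\<theta> 0) else if i = Z then cis (\<theta> b) / cis (\<theta> a) else cis (\<theta> 1) / cis (\<theta> b)) (\<sigma> j2) *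
         (\<lambda>i. if i = X then (\<gamma> a - \<gamma> 0) / cis (\<theta> 0) else if i = Z then (\<gamma> b - \<gamma> a) / cis (\<theta> a) else (\<gamma> 1 - \<gamma> b) / cis (\<theta> b)) (\<sigma> j3)) = 0"
        using alg_ACB[OF nz Fab] dXYZ u01 unfolding X Y Z by simp
    qed
  next
    assume o: "Z < Y" "Y < X"
    show ?thesis
    proof (rule key[OF sigma k ut u01 _ o(1) o(2) _ ab js])
      show "1 \<le> Z" "X \<le> k" using rXYZ by auto
      show "{\<sigma> j1, \<sigma> j2, \<sigma> j3} = {Z, Y, X}" using X Y Z by auto
      show "(\<lambda>i. if i = Z then (\<gamma> a - \<gamma> 0) / cis (\<theta> 0) else if i = Y then (\<gamma> b - \<gamma> a) / cis (\<theta> a) else (\<gamma> 1 - \<gamma> b) / cis (\<theta> b)) (\<sigma> j1) +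
        (\<lambda>i. if i = Z then cis (\<theta> a) / cis (\<theta> 0) else if i = Y then cis (\<theta> b) / cis (\<theta> a) else cis (\<theta> 1) / cis (\<theta> b)) (\<sigma> j1) *
        ((\<lambda>i. if i = Z then (\<gamma> a - \<gamma> 0) / cis (\<theta> 0) else if i = Y then (\<gamma> b - \<gamma> a) / cis (\<theta> a) else (\<gamma> 1 - \<gamma> b) / cis (\<theta> b)) (\<sigma> j2) +
         (\<lambda>i. if i = Z then cis (\<theta> a) / cis (\<theta> 0) else if i = Y then cis (\<theta> b) / cis (\<theta> a) else cis (\<theta> 1) / cis (\<theta> b)) (\<sigma> j2) *
         (\<lambda>i. if i = Z then (\<gamma> a - \<gamma> 0) / cis (\<theta> 0) else if i = Y then (\<gamma> b - \<gamma> a) / cis (\<theta> a) else (\<gamma> 1 - \<gamma> b) / cis (\<theta> b)) (\<sigma> j3)) = 0"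
        using alg_CBA[OF nz Fab] dXYZ u01 unfolding X Y Z by simp
    qed
  qed
qed


theorem proposition4p6:
  fixes \<gamma> \<gamma>' :: "real \<Rightarrow> complex" and \<theta> :: "real \<Rightarrow> real" and c :: real
    and m :: int and k :: nat and \<sigma> :: "nat \<Rightarrow> nat"
  assumes deriv: "\<forall>s\<in>{0..1}. (\<gamma> has_vector_derivative \<gamma>' s) (at s within {0..1})"
    and cont_deriv: "continuous_on {0..1} \<gamma>'"
    and c_pos: "c > 0"
    and speed: "\<forall>s\<in>{0..1}. norm (\<gamma>' s) = c"
    and not_closed: "\<gamma> 0 \<noteq> \<gamma> 1"
    and theta_cont: "continuous_on {0..1} \<theta>"
    and theta_turn: "\<forall>s\<in>{0..1}. \<gamma>' s = complex_of_real c * cis (\<theta> s)"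
    and theta_total: "\<theta> 1 - \<theta> 0 = 2 * pi * of_int m"
    and m_nz: "m \<noteq> 0"
    and k_ge: "k \<ge> 4"
    and sigma: "\<sigma> permutes {1..k}"
  shows "(\<exists>C \<in> Dk_boundary k. closed_C1 (rcurve \<gamma> k \<sigma> C)) \<longleftrightarrow> \<sigma> \<notin> Zk k"
proof -
  have k1: "k \<ge> 1" using k_ge by simp
  have ut: "\<And>s. s \<in> {0..1} \<Longrightarrow> utan \<gamma> s = cis (\<theta> s)"
    using utan_eq[OF deriv theta_turn c_pos] by blast
  have t1: "\<theta> 1 = \<theta> 0 + 2 * pi * of_int m" using theta_total by simp
  have u01: "cis (\<theta> 1) = cis (\<theta> 0)"
  proof -
    have "cis (\<theta> 1) = cis (\<theta> 0) * cis (2 * pi * real_of_int m)" unfolding t1 cis_mult ..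
    also have "cis (2 * pi * real_of_int m) = 1" by (rule cis_multiple_2pi) simp
    finally show ?thesis by simp
  qed
  have tt: "\<theta> 1 \<noteq> \<theta> 0" using t1 m_nz by simp
  have contG: "continuous_on {0..1} \<gamma>"
    using deriv has_vector_derivative_continuous continuous_on_eq_continuous_within by blast
  show ?thesis
  proof
    assume "\<exists>C \<in> Dk_boundary k. closed_C1 (rcurve \<gamma> k \<sigma> C)"
    then obtain C where CB: "C \<in> Dk_boundary k" and cl: "closed_C1 (rcurve \<gamma> k \<sigma> C)" by blast
    have CD: "C \<in> Dk k"
      using CB frontier_of_subset_closedin[OF Dk_closed[OF k1]] unfolding Dk_boundary_def by blast
    have rc: "good (rcurve \<gamma> k \<sigma> C)" using rc_lemma[OF sigma k1 ut CD] by blast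
    have D0: "Dn (rcurve \<gamma> k \<sigma> C) = 0" using closed_iff[OF rc] cl by blast
    show "\<sigma> \<notin> Zk k"
    proof
      assume "\<sigma> \<in> Zk k"
      then obtain h where h: "h < k" "\<sigma> = zshift k h" unfolding Zk_def by blast
      show False using dir1[OF sigma k1 ut u01 not_closed CD h] D0 by blast
    qed
  next
    assume "\<sigma> \<notin> Zk k"
    then show "\<exists>C \<in> Dk_boundary k. closed_C1 (rcurve \<gamma> k \<sigma> C)"
      using dir2[OF sigma k_ge ut u01 contG theta_cont tt] by blast
  qed
qed

end
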